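(* Let $n\ge5$, let $B=\mathrm{Sym}(n)$ with $+$ denoting composition of permutations, and let $c=(1\,2)$. Define $\lambda_a=\mathrm{id}$ for $a\in\mathrm{Alt}(n)$ and $\lambda_a(b)=c+b-c$ for $a\notin\mathrm{Alt}(n)$, and $a\circ b=a+\lambda_a(b)$. Then $(B,+,\circ)$ is a skew left brace, the set $X$ of all transpositions in $\mathrm{Sym}(n)$ satisfies $r_B(X\times X)=X\times X$, and $(X,r_B|_{X\times X})$ is a simple non-degenerate solution of the Yang--Baxter equation of cardinality $n(n-1)/2$.
   Context: A skew left brace is a triple $(B,+,\circ)$ with $(B,+)$ and $(B,\circ)$ groups and $a\circ(b+c)=a\circ b-a+a\circ c$; then $\lambda_a(b)=-a+a\circ b$, and $a^{-1}$ denotes the $\circ$-inverse. The associated solution is $r_B(a,b)=(\lambda_a(b),\lambda_a(b)^{-1}\circ a\circ b)$. A set-theoretic solution $(X,r)$: $r$ satisfies $(r\times\mathrm{id})(\mathrm{id}\times r)(r\times\mathrm{id})=(\mathrm{id}\times r)(r\times\mathrm{id})(\mathrm{id}\times r)$; writing $r(x,y)=(\lambda_x(y),\rho_y(x))$, non-degenerate means $r$ and all $\lambda_x,\rho_y$ are bijective. A morphism $f\colon(X,r)\to(Y,s)$ is a map with $(f\times f)r=s(f\times f)$; $(X,r)$ with $|X|>1$ is simple if every surjective morphism $(X,r)\to(Y,s)$ is bijective or has $|Y|=1$. *)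

theory Defs
  imports "HOL-Algebra.Group" "HOL-Combinatorics.Permutations" "HOL-Combinatorics.Transposition"
begin

definition grp :: "'a set \<Rightarrow> ('a \<Rightarrow> 'a \<Rightarrow> 'a) \<Rightarrow> 'a monoid" where
  "grp B op = \<lparr>carrier = B, monoid.mult = op,
      one = (THE e. e \<in> B \<and> (\<forall>x\<in>B. op e x = x \<and> op x e = x))\<rparr>"

definition skew_left_brace :: "'a set \<Rightarrow> ('a \<Rightarrow> 'a \<Rightarrow> 'a) \<Rightarrow> ('a \<Rightarrow> 'a \<Rightarrow> 'a) \<Rightarrow> bool" where
  "skew_left_brace B add circ \<longleftrightarrow>
     group (grp B add) \<and> group (grp B circ) \<and>
     (\<forall>a\<in>B. \<forall>b\<in>B. \<forall>c\<in>B.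
        circ a (add b c) = add (add (circ a b) (inv\<^bsub>grp B add\<^esub> a)) (circ a c))"

definition brace_lambda :: "'a set \<Rightarrow> ('a \<Rightarrow> 'a \<Rightarrow> 'a) \<Rightarrow> ('a \<Rightarrow> 'a \<Rightarrow> 'a) \<Rightarrow> 'a \<Rightarrow> 'a \<Rightarrow> 'a" where
  "brace_lambda B add circ a b = add (inv\<^bsub>grp B add\<^esub> a) (circ a b)"

definition brace_solution :: "'a set \<Rightarrow> ('a \<Rightarrow> 'a \<Rightarrow> 'a) \<Rightarrow> ('a \<Rightarrow> 'a \<Rightarrow> 'a) \<Rightarrow> 'a \<times> 'a \<Rightarrow> 'a \<times> 'a" where
  "brace_solution B add circ = (\<lambda>(a, b).
     (brace_lambda B add circ a b,
      circ (circ (inv\<^bsub>grp B circ\<^esub> (brace_lambda B add circ a b)) a) b))"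

definition is_solution :: "'a set \<Rightarrow> ('a \<times> 'a \<Rightarrow> 'a \<times> 'a) \<Rightarrow> bool" where
  "is_solution X r \<longleftrightarrow>
     (\<forall>p\<in>X \<times> X. r p \<in> X \<times> X) \<and>
     (\<forall>x\<in>X. \<forall>y\<in>X. \<forall>z\<in>X.
        (let (u1, v1) = r (x, y); (u2, v2) = r (v1, z); (u3, v3) = r (u1, u2)
         in let (p1, q1) = r (y, z); (p2, q2) = r (x, p1); (p3, q3) = r (q2, q1)
         in (u3, v3, v2) = (p2, p3, q3)))"

definition sol_lambda :: "('a \<times> 'a \<Rightarrow> 'a \<times> 'a) \<Rightarrow> 'a \<Rightarrow> 'a \<Rightarrow> 'a" where
  "sol_lambda r x y = fst (r (x, y))"

definition sol_rho :: "('a \<times> 'a \<Rightarrow> 'a \<times> 'a) \<Rightarrow> 'a \<Rightarrow> 'a \<Rightarrow> 'a" where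
  "sol_rho r y x = snd (r (x, y))"

definition non_degenerate :: "'a set \<Rightarrow> ('a \<times> 'a \<Rightarrow> 'a \<times> 'a) \<Rightarrow> bool" where
  "non_degenerate X r \<longleftrightarrow>
     bij_betw r (X \<times> X) (X \<times> X) \<and>
     (\<forall>x\<in>X. bij_betw (sol_lambda r x) X X) \<and>
     (\<forall>y\<in>X. bij_betw (sol_rho r y) X X)"

definition sol_morphism :: "'a set \<Rightarrow> ('a \<times> 'a \<Rightarrow> 'a \<times> 'a) \<Rightarrow> 'b set \<Rightarrow> ('b \<times> 'b \<Rightarrow> 'b \<times> 'b) \<Rightarrow> ('a \<Rightarrow> 'b) \<Rightarrow> bool" where
  "sol_morphism X r Y s f \<longleftrightarrow>
     f ` X \<subseteq> Y \<and>
     (\<forall>x\<in>X. \<forall>y\<in>X. map_prod f f (r (x, y)) = s (f x, f y))"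

text \<open>Simple solution; the targets (Y,s) range over solutions whose underlying set lives in an
  arbitrary type 'b (the type is a parameter, universally quantified at theorem level).\<close>
definition simple_solution :: "'b itself \<Rightarrow> 'a set \<Rightarrow> ('a \<times> 'a \<Rightarrow> 'a \<times> 'a) \<Rightarrow> bool" where
  "simple_solution (_ :: 'b itself) X r \<longleftrightarrow>
     1 < card X \<and>
     (\<forall>(Y :: 'b set) s f. is_solution Y s \<and> sol_morphism X r Y s f \<and> f ` X = Y \<longrightarrow>
        bij_betw f X Y \<or> (\<exists>y. Y = {y}))"

end

theory Submission
  imports Defs
begin

lemma grp_group:
  assumes cl: "\<And>x y. x \<in> B \<Longrightarrow> y \<in> B \<Longrightarrow> op x y \<in> B"
    and e: "e \<in> B" and le: "\<And>x. x \<in> B \<Longrightarrow> op e x = x" and re: "\<And>x. x \<in> B \<Longrightarrow> op x e = x"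
    and assoc: "\<And>x y z. x \<in> B \<Longrightarrow> y \<in> B \<Longrightarrow> z \<in> B \<Longrightarrow> op (op x y) z = op x (op y z)"
    and invex: "\<And>x. x \<in> B \<Longrightarrow> \<exists>y\<in>B. op y x = e"
  shows "group (grp B op) \<and> one (grp B op) = e"
proof -
  have one: "one (grp B op) = e"
    unfolding grp_def apply simp
    apply (rule the_equality)
    using e le re apply blast
    using e le re by metis
  have "group (grp B op)"
    apply (rule groupI)
    using cl e le assoc invex one by (auto simp: grp_def)
  with one show ?thesis by simp
qed

lemma grp_inv:
  assumes "group (grp B op)" "x \<in> B" "y \<in> B" "op y x = one (grp B op)"
  shows "inv\<^bsub>grp B op\<^esub> x = y"
  using group.inv_equality[OF assms(1), of y x] assms by (simp add: grp_def)

lemma transpose_cancel [simp]: "transpose a b \<circ> (transpose a b \<circ> f) = f"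
  by (simp add: comp_assoc[symmetric])

lemma transpose_conj: "transpose u v \<circ> (transpose i j \<circ> transpose u v) = transpose (transpose u v i) (transpose u v j)"
  by (auto simp: fun_eq_iff transpose_def)

lemma perm_conj_transpose:
  assumes "bij p"
  shows "p \<circ> (transpose i j \<circ> Hilbert_Choice.inv p) = transpose (p i) (p j)"
proof -
  have "transpose (p i) (p j) \<circ> p = p \<circ> transpose i j"
    using transpose_comp_eq[OF assms, of "p i" "p j"] assms by (simp add: bij_is_inj)
  hence "transpose (p i) (p j) \<circ> p \<circ> Hilbert_Choice.inv p = p \<circ> transpose i j \<circ> Hilbert_Choice.inv p" by simp
  moreover have "p \<circ> Hilbert_Choice.inv p = id" using assms by (meson bij_is_surj surj_iff)
  ultimately show ?thesis by (simp add: comp_assoc)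
qed

lemma is_solution_cong:
  assumes eq: "\<And>a b. a \<in> X \<Longrightarrow> b \<in> X \<Longrightarrow> r (a,b) = r' (a,b)"
    and cl: "\<And>a b. a \<in> X \<Longrightarrow> b \<in> X \<Longrightarrow> r' (a,b) \<in> X \<times> X"
  shows "is_solution X r \<longleftrightarrow> is_solution X r'"
proof -
  have 1: "(\<forall>p\<in>X \<times> X. r p \<in> X \<times> X)" "(\<forall>p\<in>X \<times> X. r' p \<in> X \<times> X)"
    using eq cl by auto
  have 2: "(let (u1, v1) = r (x, y); (u2, v2) = r (v1, z); (u3, v3) = r (u1, u2)
         in let (p1, q1) = r (y, z); (p2, q2) = r (x, p1); (p3, q3) = r (q2, q1)
         in (u3, v3, v2) = (p2, p3, q3)) =
    (let (u1, v1) = r' (x, y); (u2, v2) = r' (v1, z); (u3, v3) = r' (u1, u2)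
         in let (p1, q1) = r' (y, z); (p2, q2) = r' (x, p1); (p3, q3) = r' (q2, q1)
         in (u3, v3, v2) = (p2, p3, q3))" if xyz: "x \<in> X" "y \<in> X" "z \<in> X" for x y z
  proof -
    obtain u1 v1 where a: "r' (x,y) = (u1,v1)" "u1 \<in> X" "v1 \<in> X" using cl xyz by fastforce
    obtain u2 v2 where b: "r' (v1,z) = (u2,v2)" "u2 \<in> X" "v2 \<in> X" using cl xyz a by fastforce
    obtain u3 v3 where c: "r' (u1,u2) = (u3,v3)" "u3 \<in> X" "v3 \<in> X" using cl xyz a b by fastforce
    obtain p1 q1 where d: "r' (y,z) = (p1,q1)" "p1 \<in> X" "q1 \<in> X" using cl xyz by fastforce
    obtain p2 q2 where e: "r' (x,p1) = (p2,q2)" "p2 \<in> X" "q2 \<in> X" using cl xyz d by fastforce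
    obtain p3 q3 where f: "r' (q2,q1) = (p3,q3)" "p3 \<in> X" "q3 \<in> X" using cl xyz d e by fastforce
    have "r (x,y) = (u1,v1)" "r (v1,z) = (u2,v2)" "r (u1,u2) = (u3,v3)"
      "r (y,z) = (p1,q1)" "r (x,p1) = (p2,q2)" "r (q2,q1) = (p3,q3)"
      using eq a b c d e f xyz by metis+
    thus ?thesis using a b c d e f by simp
  qed
  show ?thesis unfolding is_solution_def using 1 2 by auto
qed

lemma non_degenerate_cong:
  assumes eq: "\<And>a b. a \<in> X \<Longrightarrow> b \<in> X \<Longrightarrow> r (a,b) = r' (a,b)"
  shows "non_degenerate X r \<longleftrightarrow> non_degenerate X r'"
proof -
  have "bij_betw r (X \<times> X) (X \<times> X) = bij_betw r' (X \<times> X) (X \<times> X)"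
    by (rule bij_betw_cong) (use eq in auto)
  moreover have "\<And>x. x \<in> X \<Longrightarrow> bij_betw (sol_lambda r x) X X = bij_betw (sol_lambda r' x) X X"
    by (rule bij_betw_cong) (use eq in \<open>auto simp: sol_lambda_def\<close>)
  moreover have "\<And>x. x \<in> X \<Longrightarrow> bij_betw (sol_rho r x) X X = bij_betw (sol_rho r' x) X X"
    by (rule bij_betw_cong) (use eq in \<open>auto simp: sol_rho_def\<close>)
  ultimately show ?thesis unfolding non_degenerate_def by simp
qed

lemma simple_solution_cong:
  assumes eq: "\<And>a b. a \<in> X \<Longrightarrow> b \<in> X \<Longrightarrow> r (a,b) = r' (a,b)"
  shows "simple_solution (T::'b itself) X r \<longleftrightarrow> simple_solution T X r'"
proof -
  have "sol_morphism X r Y s f = sol_morphism X r' Y s f" for Y :: "'b set" and s f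
    unfolding sol_morphism_def using eq by auto
  thus ?thesis unfolding simple_solution_def by simp
qed



definition Lm :: "(nat \<Rightarrow> nat) \<Rightarrow> (nat \<Rightarrow> nat) \<Rightarrow> (nat \<Rightarrow> nat)" where
  "Lm a b = (if evenperm a then b else transpose 1 2 \<circ> (b \<circ> transpose 1 2))"

lemma perm_of: "p permutes {1..n::nat} \<Longrightarrow> permutation p"
  by (meson finite_atLeastAtMost permutes_imp_permutation)

lemma evenperm_conj_c: "permutation b \<Longrightarrow> evenperm (transpose 1 2 \<circ> (b \<circ> transpose (1::nat) 2)) = evenperm b"
  by (simp add: evenperm_comp permutation_compose permutation_swap_id evenperm_swap)

lemma Lm_even: "permutation b \<Longrightarrow> evenperm (Lm a b) = evenperm b"
  using evenperm_conj_c[of b] by (simp add: Lm_def)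

lemma inv_cancel: "p permutes S \<Longrightarrow> Hilbert_Choice.inv p \<circ> (p \<circ> f) = f"
  by (simp add: comp_assoc[symmetric] permutes_inv_o)

lemma Lm_hom: "Lm a (b \<circ> d) = Lm a b \<circ> Lm a d"
  by (simp add: Lm_def comp_assoc)

lemma Lm_id [simp]: "Lm a id = id"
  by (simp add: Lm_def)

lemma id_Lm [simp]: "Lm id b = b"
  by (simp add: Lm_def)

lemma c_perm: "2 \<le> n \<Longrightarrow> transpose 1 2 permutes {1..n::nat}"
  by (rule permutes_swap_id) auto

lemma Lm_perm: "2 \<le> n \<Longrightarrow> b permutes {1..n} \<Longrightarrow> Lm a b permutes {1..n}"
  unfolding Lm_def using c_perm[of n] by (auto intro!: permutes_compose)

lemma Lm_Lm: "permutation a \<Longrightarrow> permutation b \<Longrightarrow> Lm a (Lm b d) = Lm (a \<circ> Lm a b) d"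
  by (cases "evenperm a"; cases "evenperm b")
     (simp_all add: Lm_def comp_assoc evenperm_comp evenperm_conj_c permutation_compose permutation_swap_id)

lemma main_brace:
  fixes n :: nat
  assumes n2: "2 \<le> n"
  defines "B \<equiv> {p :: nat \<Rightarrow> nat. p permutes {1..n}}"
      and "add \<equiv> (\<lambda>a b :: nat \<Rightarrow> nat. a \<circ> b)"
      and "circ \<equiv> (\<lambda>a b :: nat \<Rightarrow> nat. a \<circ> (if evenperm a then b
              else transpose (1::nat) 2 \<circ> b \<circ> Hilbert_Choice.inv (transpose (1::nat) 2)))"
  shows "skew_left_brace B add circ"
    and "\<And>a b. a \<in> B \<Longrightarrow> b \<in> B \<Longrightarrow> brace_lambda B add circ a b = Lm a b"
    and "\<And>a. a \<in> B \<Longrightarrow> inv\<^bsub>grp B circ\<^esub> a = Hilbert_Choice.inv (Lm a a)"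
    and "\<And>a b. circ a b = a \<circ> Lm a b"
proof -
  have ce: "circ = (\<lambda>a b. a \<circ> Lm a b)" unfolding circ_def Lm_def by (simp add: comp_assoc fun_eq_iff)
  show "\<And>a b. circ a b = a \<circ> Lm a b" using ce by simp
  have pB: "a \<in> B \<Longrightarrow> permutation a" for a unfolding B_def using perm_of by blast
  have ga: "group (grp B add) \<and> one (grp B add) = id"
    apply (rule grp_group)
    unfolding add_def B_def
    using permutes_compose permutes_inv permutes_inv_o by (auto simp: permutes_id) blast
  have invadd: "a \<in> B \<Longrightarrow> inv\<^bsub>grp B add\<^esub> a = Hilbert_Choice.inv a" for a
    apply (rule grp_inv) using ga unfolding add_def B_def
    by (auto simp: permutes_inv permutes_inv_o)
  have clc: "a \<in> B \<Longrightarrow> b \<in> B \<Longrightarrow> a \<circ> Lm a b \<in> B" for a b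
    unfolding B_def using Lm_perm[OF n2] by (auto intro!: permutes_compose)
  have invB: "a \<in> B \<Longrightarrow> Hilbert_Choice.inv (Lm a a) \<in> B" for a
    unfolding B_def using Lm_perm[OF n2] permutes_inv by auto
  have linv: "a \<in> B \<Longrightarrow> Hilbert_Choice.inv (Lm a a) \<circ> Lm (Hilbert_Choice.inv (Lm a a)) a = id" for a
  proof -
    assume a: "a \<in> B"
    have "evenperm (Hilbert_Choice.inv (Lm a a)) = evenperm a"
      using a pB Lm_even Lm_perm[OF n2] perm_of evenperm_inv unfolding B_def by (metis mem_Collect_eq)
    hence "Lm (Hilbert_Choice.inv (Lm a a)) a = Lm a a" by (simp add: Lm_def)
    moreover have "Lm a a permutes {1..n}" using a Lm_perm[OF n2] unfolding B_def by auto
    ultimately show ?thesis using permutes_inv_o(2) by metis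
  qed
  have gc: "group (grp B circ) \<and> one (grp B circ) = id"
    apply (rule grp_group)
    unfolding ce
    using clc apply blast
    apply (simp add: B_def permutes_id)
    apply simp
    apply simp
    subgoal for x y z using Lm_Lm[OF pB pB, of x y z] by (simp add: Lm_hom comp_assoc)
    using invB linv by blast
  show invc: "\<And>a. a \<in> B \<Longrightarrow> inv\<^bsub>grp B circ\<^esub> a = Hilbert_Choice.inv (Lm a a)"
    apply (rule grp_inv) using gc invB linv unfolding ce by auto
  show "\<And>a b. a \<in> B \<Longrightarrow> b \<in> B \<Longrightarrow> brace_lambda B add circ a b = Lm a b"
    unfolding brace_lambda_def using invadd unfolding ce add_def B_def
    by (simp add: comp_assoc[symmetric] permutes_inv_o)
  show "skew_left_brace B add circ"
    unfolding skew_left_brace_def using ga gc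
    apply (simp add: invadd)
    unfolding ce add_def B_def
    by (auto simp: Lm_hom comp_assoc inv_cancel)
qed



definition XX :: "nat \<Rightarrow> (nat \<Rightarrow> nat) set" where
  "XX n = {transpose i j | i j. i \<in> {1..n} \<and> j \<in> {1..n} \<and> i \<noteq> j}"

definition Rsol :: "(nat \<Rightarrow> nat) \<times> (nat \<Rightarrow> nat) \<Rightarrow> (nat \<Rightarrow> nat) \<times> (nat \<Rightarrow> nat)" where
  "Rsol p = (case p of (x, y) \<Rightarrow> (transpose 1 2 \<circ> (y \<circ> transpose 1 2),
      y \<circ> (transpose 1 2 \<circ> (x \<circ> (transpose 1 2 \<circ> y)))))"

lemma Rsol_simp [simp]: "Rsol (x, y) = (transpose 1 2 \<circ> (y \<circ> transpose 1 2),
      y \<circ> (transpose 1 2 \<circ> (x \<circ> (transpose 1 2 \<circ> y))))"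
  by (simp add: Rsol_def)

lemma XX_perm: "x \<in> XX n \<Longrightarrow> x permutes {1..n}"
  unfolding XX_def by (auto intro: permutes_swap_id)

lemma XX_odd: "x \<in> XX n \<Longrightarrow> \<not> evenperm x"
  unfolding XX_def by (auto simp: evenperm_swap)

lemma XX_inv [simp]: "x \<in> XX n \<Longrightarrow> Hilbert_Choice.inv x = x"
  unfolding XX_def by auto

lemma XX_invol [simp]: "x \<in> XX n \<Longrightarrow> x \<circ> x = id"
  unfolding XX_def by auto

lemma XX_cancel [simp]: "x \<in> XX n \<Longrightarrow> x \<circ> (x \<circ> f) = f"
  unfolding XX_def by auto

lemma XX_conj:
  assumes "p permutes {1..n}" "x \<in> XX n"
  shows "p \<circ> (x \<circ> Hilbert_Choice.inv p) \<in> XX n"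
proof -
  obtain i j where x: "x = transpose i j" "i \<in> {1..n}" "j \<in> {1..n}" "i \<noteq> j"
    using assms(2) unfolding XX_def by blast
  have "p \<circ> (x \<circ> Hilbert_Choice.inv p) = transpose (p i) (p j)"
    using perm_conj_transpose[of p i j] assms(1) x(1) permutes_bij by blast
  moreover have "p i \<in> {1..n}" "p j \<in> {1..n}" "p i \<noteq> p j"
    using x assms(1) permutes_in_image[OF assms(1)] permutes_inj[OF assms(1)]
    by (auto dest: injD)
  ultimately show ?thesis unfolding XX_def by blast
qed

lemma c_XX: "2 \<le> n \<Longrightarrow> transpose 1 2 \<in> XX n"
  unfolding XX_def by force

lemma XX_c:
  assumes "2 \<le> n" "x \<in> XX n"
  shows "transpose 1 2 \<circ> (x \<circ> transpose 1 2) \<in> XX n"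
  using XX_conj[OF c_perm[OF assms(1)] assms(2)] by simp

lemma XX_yc:
  assumes "2 \<le> n" "x \<in> XX n" "y \<in> XX n"
  shows "y \<circ> (transpose 1 2 \<circ> (x \<circ> (transpose 1 2 \<circ> y))) \<in> XX n"
proof -
  have p: "y \<circ> transpose 1 2 permutes {1..n}"
    using assms XX_perm c_perm by (blast intro: permutes_compose)
  have "Hilbert_Choice.inv (y \<circ> transpose 1 2) = transpose 1 2 \<circ> y"
    using assms(3) by (simp add: o_inv_distrib permutes_bij[OF XX_perm])
  thus ?thesis using XX_conj[OF p assms(2)] by (simp add: comp_assoc)
qed

lemma Rsol_cl: "2 \<le> n \<Longrightarrow> x \<in> XX n \<Longrightarrow> y \<in> XX n \<Longrightarrow> Rsol (x, y) \<in> XX n \<times> XX n"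
  using XX_c XX_yc by simp

lemma XX_perm': "x \<in> XX n \<Longrightarrow> permutation x"
  using XX_perm perm_of by blast

lemma sol_eq:
  fixes n :: nat
  assumes n2: "2 \<le> n"
  defines "B \<equiv> {p :: nat \<Rightarrow> nat. p permutes {1..n}}"
      and "add \<equiv> (\<lambda>a b :: nat \<Rightarrow> nat. a \<circ> b)"
      and "circ \<equiv> (\<lambda>a b :: nat \<Rightarrow> nat. a \<circ> (if evenperm a then b
              else transpose (1::nat) 2 \<circ> b \<circ> Hilbert_Choice.inv (transpose (1::nat) 2)))"
  assumes x: "x \<in> XX n" and y: "y \<in> XX n"
  shows "brace_solution B add circ (x, y) = Rsol (x, y)"
proof -
  note mb = main_brace[OF n2, folded B_def add_def circ_def]
  have c4: "circ a b = a \<circ> Lm a b" for a b unfolding circ_def Lm_def by (simp add: comp_assoc)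
  have xB: "x \<in> B" and yB: "y \<in> B" using x y XX_perm unfolding B_def by auto
  have t: "brace_lambda B add circ x y = transpose 1 2 \<circ> (y \<circ> transpose 1 2)"
    using mb(2)[OF xB yB] XX_odd[OF x] by (simp add: Lm_def)
  have tX: "transpose 1 2 \<circ> (y \<circ> transpose 1 2) \<in> XX n" using XX_c[OF n2 y] .
  have tB: "transpose 1 2 \<circ> (y \<circ> transpose 1 2) \<in> B" using tX XX_perm unfolding B_def by auto
  have it: "inv\<^bsub>grp B circ\<^esub> (transpose 1 2 \<circ> (y \<circ> transpose 1 2)) = y"
    using mb(3)[OF tB] XX_odd[OF tX] y by (simp add: Lm_def comp_assoc)
  have ev: "evenperm (y \<circ> (transpose 1 2 \<circ> (x \<circ> transpose 1 2)))"
    using XX_odd[OF x] XX_odd[OF y] XX_perm'[OF x] XX_perm'[OF y]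
    by (simp add: evenperm_comp permutation_compose permutation_swap_id evenperm_swap)
  show ?thesis
    unfolding brace_solution_def using t it ev XX_odd[OF y]
    by (simp add: c4 Lm_def comp_assoc)
qed



lemma XX_cy:
  assumes "2 \<le> n" "v \<in> XX n" "y \<in> XX n"
  shows "transpose 1 2 \<circ> (y \<circ> (v \<circ> (y \<circ> transpose 1 2))) \<in> XX n"
proof -
  have p: "transpose 1 2 \<circ> y permutes {1..n}"
    using assms XX_perm c_perm by (blast intro: permutes_compose)
  have "Hilbert_Choice.inv (transpose 1 2 \<circ> y) = y \<circ> transpose 1 2"
    using assms(3) by (simp add: o_inv_distrib permutes_bij[OF XX_perm])
  thus ?thesis using XX_conj[OF p assms(2)] by (simp add: comp_assoc)
qed

lemma Rsol_is_solution: "2 \<le> n \<Longrightarrow> is_solution (XX n) Rsol"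
  unfolding is_solution_def
  using Rsol_cl by (auto simp: Let_def comp_assoc)
lemma Rsol_nondeg:
  assumes n2: "2 \<le> n"
  shows "non_degenerate (XX n) Rsol"
proof -
  let ?c = "transpose (1::nat) 2"
  define g where "g = (\<lambda>(u,v). (?c \<circ> ((?c \<circ> (u \<circ> ?c)) \<circ> (v \<circ> ((?c \<circ> (u \<circ> ?c)) \<circ> ?c))), ?c \<circ> (u \<circ> ?c)))"
  have 1: "bij_betw Rsol (XX n \<times> XX n) (XX n \<times> XX n)"
  proof (rule bij_betwI[where g = g])
    show "Rsol \<in> XX n \<times> XX n \<rightarrow> XX n \<times> XX n" using Rsol_cl[OF n2] by auto
    show "g \<in> XX n \<times> XX n \<rightarrow> XX n \<times> XX n"
      using XX_cy[OF n2] XX_c[OF n2] by (auto simp: g_def)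
    show "g (Rsol x) = x" if "x \<in> XX n \<times> XX n" for x
      using that by (auto simp: g_def comp_assoc)
    show "Rsol (g y) = y" if "y \<in> XX n \<times> XX n" for y
      using that XX_c[OF n2] by (auto simp: g_def comp_assoc)
  qed
  have 2: "bij_betw (sol_lambda Rsol x) (XX n) (XX n)" if "x \<in> XX n" for x
  proof (rule bij_betwI[where g = "\<lambda>y. ?c \<circ> (y \<circ> ?c)"])
    show "sol_lambda Rsol x \<in> XX n \<rightarrow> XX n" using XX_c[OF n2] by (auto simp: sol_lambda_def)
    show "(\<lambda>y. ?c \<circ> (y \<circ> ?c)) \<in> XX n \<rightarrow> XX n" using XX_c[OF n2] by auto
    show "?c \<circ> (sol_lambda Rsol x y \<circ> ?c) = y" for y by (simp add: sol_lambda_def comp_assoc)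
    show "sol_lambda Rsol x (?c \<circ> (y \<circ> ?c)) = y" for y by (simp add: sol_lambda_def comp_assoc)
  qed
  have 3: "bij_betw (sol_rho Rsol y) (XX n) (XX n)" if y: "y \<in> XX n" for y
  proof (rule bij_betwI[where g = "\<lambda>v. ?c \<circ> (y \<circ> (v \<circ> (y \<circ> ?c)))"])
    show "sol_rho Rsol y \<in> XX n \<rightarrow> XX n" using XX_yc[OF n2 _ y] by (auto simp: sol_rho_def)
    show "(\<lambda>v. ?c \<circ> (y \<circ> (v \<circ> (y \<circ> ?c)))) \<in> XX n \<rightarrow> XX n" using XX_cy[OF n2 _ y] by auto
    show "?c \<circ> (y \<circ> (sol_rho Rsol y x \<circ> (y \<circ> ?c))) = x" for x using y by (simp add: sol_rho_def comp_assoc)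
    show "sol_rho Rsol y (?c \<circ> (y \<circ> (x \<circ> (y \<circ> ?c)))) = x" for x using y by (simp add: sol_rho_def comp_assoc)
  qed
  show ?thesis unfolding non_degenerate_def using 1 2 3 by blast
qed
lemma support_transpose: "i \<noteq> j \<Longrightarrow> {x. transpose i j x \<noteq> x} = {i, j}"
  by (auto simp: transpose_def)

lemma card_XX: "card (XX n) = n * (n - 1) div 2"
proof -
  let ?g = "\<lambda>p::nat\<Rightarrow>nat. {x. p x \<noteq> x}"
  have "bij_betw ?g (XX n) {A. A \<subseteq> {1..n} \<and> card A = 2}"
  proof (rule bij_betw_imageI)
    show "inj_on ?g (XX n)"
    proof (rule inj_onI)
      fix p q assume "p \<in> XX n" "q \<in> XX n" "?g p = ?g q"
      assume pq: "p \<in> XX n" "q \<in> XX n" "?g p = ?g q"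
      obtain i j where ij: "p = transpose i j" "i \<noteq> j" using pq(1) unfolding XX_def by blast
      obtain k l where kl: "q = transpose k l" "k \<noteq> l" using pq(2) unfolding XX_def by blast
      have "?g p = {i,j}" using ij support_transpose by simp
      moreover have "?g q = {k,l}" using kl support_transpose by simp
      ultimately have "{i,j} = {k,l}" using pq(3) by simp
      hence "(i = k \<and> j = l) \<or> (i = l \<and> j = k)" by (simp add: doubleton_eq_iff)
      thus "p = q" using ij(1) kl(1) transpose_commute by metis
    qed
    show "?g ` XX n = {A. A \<subseteq> {1..n} \<and> card A = 2}"
    proof
      show "?g ` XX n \<subseteq> {A. A \<subseteq> {1..n} \<and> card A = 2}"
      proof
        fix A assume "A \<in> ?g ` XX n"
        then obtain i j where "A = ?g (transpose i j)" "i \<in> {1..n}" "j \<in> {1..n}" "i \<noteq> j"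
          unfolding XX_def by blast
        moreover have "?g (transpose i j) = {i,j}" using calculation support_transpose by simp
        ultimately show "A \<in> {A. A \<subseteq> {1..n} \<and> card A = 2}" by simp
      qed
      show "{A. A \<subseteq> {1..n} \<and> card A = 2} \<subseteq> ?g ` XX n"
      proof
        fix A assume "A \<in> {A. A \<subseteq> {1..n} \<and> card A = 2}"
        then obtain x y where "A = {x,y}" "x \<noteq> y" "x \<in> {1..n}" "y \<in> {1..n}"
          by (auto simp: card_2_iff)
        moreover have t: "transpose x y \<in> XX n" using calculation unfolding XX_def by blast
        moreover have e: "A = ?g (transpose x y)" using calculation support_transpose[of x y] by simp
        ultimately show "A \<in> ?g ` XX n" by (intro image_eqI[where f="?g", OF e t])
      qed
    qed
  qed
  hence "card (XX n) = card {A. A \<subseteq> {1..n} \<and> card A = 2}" by (rule bij_betw_same_card)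
  also have "\<dots> = card {1..n} choose 2" by (rule n_subsets) simp
  also have "\<dots> = n choose 2" by simp
  finally show ?thesis by (simp add: choose_two)
qed





lemma T_XX: "i \<in> {1..n} \<Longrightarrow> j \<in> {1..n} \<Longrightarrow> i \<noteq> j \<Longrightarrow> transpose i j \<in> XX n"
  unfolding XX_def by blast

lemma Rsol_simple_core:
  fixes f :: "(nat \<Rightarrow> nat) \<Rightarrow> 'b"
  assumes n5: "5 \<le> n"
    and morph: "\<And>x y. x \<in> XX n \<Longrightarrow> y \<in> XX n \<Longrightarrow> map_prod f f (Rsol (x, y)) = s (f x, f y)"
    and x1: "x1 \<in> XX n" and x2: "x2 \<in> XX n" and ne: "x1 \<noteq> x2" and fe: "f x1 = f x2"
  shows "\<exists>y. f ` XX n = {y}"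
proof -
  let ?c = "transpose (1::nat) 2"
  let ?S = "{1..n}"
  have n2: "2 \<le> n" using n5 by simp
  have K: "f (t \<circ> (x \<circ> t)) = f (t \<circ> (x' \<circ> t))"
    if t: "t \<in> XX n" and x: "x \<in> XX n" and x': "x' \<in> XX n" and e: "f x = f x'" for t x x'
  proof -
    have "map_prod f f (Rsol (t, x)) = map_prod f f (Rsol (t, x'))"
      using morph[OF t x] morph[OF t x'] e by simp
    hence a: "f (?c \<circ> (x \<circ> ?c)) = f (?c \<circ> (x' \<circ> ?c))" by simp
    have u: "?c \<circ> (x \<circ> ?c) \<in> XX n" "?c \<circ> (x' \<circ> ?c) \<in> XX n" using XX_c[OF n2] x x' by auto
    have "map_prod f f (Rsol (?c \<circ> (x \<circ> ?c), t)) = map_prod f f (Rsol (?c \<circ> (x' \<circ> ?c), t))"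
      using morph[OF u(1) t] morph[OF u(2) t] a by simp
    thus ?thesis by (simp add: comp_assoc)
  qed
  have H1: "f (transpose (transpose u v i) (transpose u v j)) = f (transpose (transpose u v k) (transpose u v l))"
    if "u \<in> ?S" "v \<in> ?S" "u \<noteq> v" "transpose i j \<in> XX n" "transpose k l \<in> XX n"
       "f (transpose i j) = f (transpose k l)" for u v i j k l
    using K[of "transpose u v" "transpose i j" "transpose k l"] that T_XX[of u n v]
    by (simp add: transpose_conj)
  have step2: "\<exists>y. f ` XX n = {y}"
    if P: "e \<in> ?S" "u \<in> ?S" "v \<in> ?S" "e \<noteq> u" "e \<noteq> v" "u \<noteq> v"
      "f (transpose e u) = f (transpose e v)" for e u v
  proof -
    have A: "f (transpose e w) = f (transpose e u)" if w: "w \<in> ?S" "w \<noteq> e" for w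
    proof (cases "w = u \<or> w = v")
      case True thus ?thesis using P by auto
    next
      case False
      have "f (transpose (transpose v w e) (transpose v w u)) = f (transpose (transpose v w e) (transpose v w v))"
        using H1[of v w e u e v] P w False T_XX by auto
      thus ?thesis using P w False by simp
    qed
    have B: "f (transpose i j) = f (transpose e u)" if ij: "i \<in> ?S" "j \<in> ?S" "i \<noteq> j" for i j
    proof -
      consider "i = e" | "j = e" | "i \<noteq> e" "j \<noteq> e" by blast
      thus ?thesis
      proof cases
        case 1 thus ?thesis using A ij by auto
      next
        case 2 thus ?thesis using A[of i] ij transpose_commute[of i j] by auto
      next
        case 3
        have "f (transpose e i) = f (transpose e j)" using A ij 3 by metis
        hence "f (transpose (transpose e j e) (transpose e j i)) = f (transpose (transpose e j e) (transpose e j j))"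
          using H1[of e j e i e j] P ij 3 T_XX by auto
        hence "f (transpose j i) = f (transpose j e)" using ij 3 by simp
        thus ?thesis using A[of j] ij 3 transpose_commute[of i j] transpose_commute[of j e] by auto
      qed
    qed
    have "f ` XX n = {f (transpose e u)}"
    proof
      show "f ` XX n \<subseteq> {f (transpose e u)}" unfolding XX_def using B by auto
      show "{f (transpose e u)} \<subseteq> f ` XX n" using T_XX[of e n u] P(1,2,4) by blast
    qed
    thus ?thesis by blast
  qed
  obtain a b where ab: "x1 = transpose a b" "a \<in> ?S" "b \<in> ?S" "a \<noteq> b" using x1 unfolding XX_def by blast
  obtain p q where pq: "x2 = transpose p q" "p \<in> ?S" "q \<in> ?S" "p \<noteq> q" using x2 unfolding XX_def by blast
  consider "a = p" | "a = q" | "b = p" | "b = q" | "a \<noteq> p" "a \<noteq> q" "b \<noteq> p" "b \<noteq> q" by blast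
  thus ?thesis
  proof cases
    case 1
    hence "b \<noteq> q" using ne ab pq by auto
    thus ?thesis using step2[of a b q] 1 ab pq fe by auto
  next
    case 2
    hence "b \<noteq> p" using ne ab pq transpose_commute[of p q] by auto
    thus ?thesis using step2[of a b p] 2 ab pq fe transpose_commute[of p q] by auto
  next
    case 3
    hence "a \<noteq> q" using ne ab pq transpose_commute[of a b] by auto
    thus ?thesis using step2[of b a q] 3 ab pq fe transpose_commute[of a b] by auto
  next
    case 4
    hence "a \<noteq> p" using ne ab pq by auto
    thus ?thesis using step2[of b a p] 4 ab pq fe transpose_commute[of a b] transpose_commute[of p q] by auto
  next
    case 5
    have "card {a,b,p,q} \<le> 4"
      using card_length[of "[a,b,p,q]"] by simp
    hence "\<not> ?S \<subseteq> {a,b,p,q}" using n5 card_mono[of "{a,b,p,q}" ?S] by auto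
    then obtain w where w: "w \<in> ?S" "w \<notin> {a,b,p,q}" by blast
    have "f (transpose (transpose q w p) (transpose q w q)) = f (transpose (transpose q w a) (transpose q w b))"
      using H1[of q w p q a b] w pq ab fe x1 x2 by auto
    moreover have "transpose q w p = p" "transpose q w a = a" "transpose q w b = b"
      using 5 w pq ab by (auto simp: transpose_def)
    ultimately have "f (transpose p w) = f (transpose a b)" by simp
    thus ?thesis using step2[of p q w] w pq ab fe by auto
  qed
qed

lemma Rsol_simple:
  assumes n5: "5 \<le> n"
  shows "simple_solution TYPE('b) (XX n) Rsol"
proof -
  have "20 \<le> n * (n - 1)" using mult_le_mono[of 5 n 4 "n - 1"] n5 by simp
  hence "1 < card (XX n)" by (simp add: card_XX)
  moreover have "bij_betw f (XX n) Y \<or> (\<exists>y. Y = {y})"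
    if "is_solution Y s" "sol_morphism (XX n) Rsol Y s f" "f ` XX n = Y" for Y :: "'b set" and s f
  proof (cases "inj_on f (XX n)")
    case True thus ?thesis using that by (simp add: bij_betw_def)
  next
    case False
    then obtain x1 x2 where "x1 \<in> XX n" "x2 \<in> XX n" "x1 \<noteq> x2" "f x1 = f x2"
      unfolding inj_on_def by blast
    moreover have "\<And>x y. x \<in> XX n \<Longrightarrow> y \<in> XX n \<Longrightarrow> map_prod f f (Rsol (x, y)) = s (f x, f y)"
      using that(2) unfolding sol_morphism_def by blast
    ultimately show ?thesis using Rsol_simple_core[OF n5] that(3) by blast
  qed
  ultimately show ?thesis unfolding simple_solution_def by blast
qed



theorem mainTheorem17:
  fixes n :: nat
  assumes "n \<ge> 5"
  defines "B \<equiv> {p :: nat \<Rightarrow> nat. p permutes {1..n}}"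
      and "add \<equiv> (\<lambda>a b :: nat \<Rightarrow> nat. a \<circ> b)"
      and "circ \<equiv> (\<lambda>a b :: nat \<Rightarrow> nat. a \<circ> (if evenperm a then b
              else transpose (1::nat) 2 \<circ> b \<circ> Hilbert_Choice.inv (transpose (1::nat) 2)))"
      and "X \<equiv> {transpose i j | i j. i \<in> {1..n} \<and> j \<in> {1..n} \<and> i \<noteq> j}"
  shows "skew_left_brace B add circ
    \<and> brace_solution B add circ ` (X \<times> X) = X \<times> X
    \<and> is_solution X (brace_solution B add circ)
    \<and> non_degenerate X (brace_solution B add circ)
    \<and> simple_solution TYPE('b) X (brace_solution B add circ)
    \<and> card X = n * (n - 1) div 2"
proof -
  have n2: "2 \<le> n" using assms(1) by simp
  have XE: "X = XX n" unfolding X_def XX_def by simp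
  have eq: "\<And>a b. a \<in> X \<Longrightarrow> b \<in> X \<Longrightarrow> brace_solution B add circ (a, b) = Rsol (a, b)"
    unfolding XE B_def add_def circ_def using sol_eq[OF n2] by blast
  have 1: "skew_left_brace B add circ"
    unfolding B_def add_def circ_def by (rule main_brace(1)[OF n2])
  have nd: "non_degenerate X Rsol" unfolding XE by (rule Rsol_nondeg[OF n2])
  have 2: "brace_solution B add circ ` (X \<times> X) = X \<times> X"
  proof -
    have "brace_solution B add circ ` (X \<times> X) = Rsol ` (X \<times> X)"
      by (rule image_cong) (use eq in auto)
    also have "\<dots> = X \<times> X" using nd unfolding non_degenerate_def by (simp add: bij_betw_def)
    finally show ?thesis .
  qed
  have 3: "is_solution X (brace_solution B add circ)"
    using is_solution_cong[of X "brace_solution B add circ" Rsol] eq Rsol_cl[OF n2] Rsol_is_solution[OF n2]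
    unfolding XE by blast
  have 4: "non_degenerate X (brace_solution B add circ)"
    using non_degenerate_cong[of X "brace_solution B add circ" Rsol] eq nd by blast
  have 5: "simple_solution TYPE('b) X (brace_solution B add circ)"
    using simple_solution_cong[of X "brace_solution B add circ" Rsol "TYPE('b)"] eq
      Rsol_simple[OF assms(1)] unfolding XE by blast
  have 6: "card X = n * (n - 1) div 2" unfolding XE by (rule card_XX)
  show ?thesis using 1 2 3 4 5 6 by blast
qed

end
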